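(* Let $x_1,\dots,x_n$ be independent random variables with support in $[0,\infty)$, finite means, and MGFs $M_{x_i}(t)=\mathbb E[e^{tx_i}]$, and let $a_1,\dots,a_n\ge 0$ be such that $\Lambda=\sum_{i=1}^n a_ix_i>0$ almost surely. Let $q:\mathsf D\to\mathbb R$ have sensitivity $\Delta q\in(0,\infty)$. Then the Randomized DP Laplace mechanism with reciprocal scale $\Lambda$ is $\epsilon$-differentially private with $$\epsilon=\ln\left[\frac{\sum_{j=1}^n a_j\,\mathbb E(x_j)}{\sum_{j=1}^n a_j\, M'_{x_j}(-a_j\Delta q)\prod_{i\ne j} M_{x_i}(-a_i\Delta q)}\right].$$
   Context: Databases form a set $\mathsf D$ with a symmetric adjacency relation $\mathrm{Adj}$. The sensitivity of $q:\mathsf D\to\mathbb R$ is $\Delta q=\sup\{|q(d)-q(d')|:\mathrm{Adj}(d,d')\}$. A randomized mechanism $M$ is $\epsilon$-differentially private if $\mathbb P(M(d)\in S)\le e^{\epsilon}\mathbb P(M(d')\in S)$ for all adjacent $d,d'$ and all Borel sets $S$. The Randomized DP Laplace mechanism with reciprocal-scale distribution $\Lambda$ (a random variable with values in $(0,\infty)$, playing the role of $1/b$ for the Laplace scale $b$) is defined by $\mathcal M_q(d)=q(d)+W$, where conditionally on $\Lambda=\lambda$ the noise $W$ is Laplace with mean $0$ and scale $1/\lambda$, i.e. has density $\frac{\lambda}{2}e^{-\lambda|w|}$; the pair $(\Lambda,W)$ is drawn independently of $d$. *)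

theory Defs
  imports "HOL-Probability.Probability"
begin

definition sensitivity :: "('d \<Rightarrow> 'd \<Rightarrow> bool) \<Rightarrow> ('d \<Rightarrow> real) \<Rightarrow> ereal" where
  "sensitivity Adj q = (SUP p \<in> {(d, d'). Adj d d'}. ereal \<bar>q (fst p) - q (snd p)\<bar>)"

definition mgf :: "'a measure \<Rightarrow> ('a \<Rightarrow> real) \<Rightarrow> real \<Rightarrow> real" where
  "mgf M X t = (\<integral>\<omega>. exp (t * X \<omega>) \<partial>M)"

definition laplace_density :: "real \<Rightarrow> real \<Rightarrow> real" where
  "laplace_density l w = l / 2 * exp (- l * \<bar>w\<bar>)"

definition differentially_private ::
  "('d \<Rightarrow> 'd \<Rightarrow> bool) \<Rightarrow> 'a measure \<Rightarrow> ('d \<Rightarrow> 'a \<Rightarrow> real) \<Rightarrow> real \<Rightarrow> bool" where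
  "differentially_private Adj M Mech eps \<longleftrightarrow>
     (\<forall>d d' S. Adj d d' \<longrightarrow> S \<in> sets borel \<longrightarrow>
        measure M {\<omega> \<in> space M. Mech d \<omega> \<in> S}
          \<le> exp eps * measure M {\<omega> \<in> space M. Mech d' \<omega> \<in> S})"

end

theory Submission
  imports Defs
begin



lemma exp_taylor2_bound:
  fixes y :: real
  shows "\<bar>exp y - 1 - y\<bar> \<le> exp \<bar>y\<bar> * y^2 / 2"
proof -
  obtain t where t: "\<bar>t\<bar> \<le> \<bar>y\<bar>" "exp y = (\<Sum>m<2. (y ^ m) / fact m) + (exp t / fact 2) * y ^ 2"
    using Maclaurin_exp_le[of y 2] by blast
  have "exp y - 1 - y = exp t / 2 * y^2" using t(2) by (simp add: numeral_2_eq_2)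
  moreover have "exp t \<le> exp \<bar>y\<bar>" using t(1) by simp
  moreover have "exp t * y^2 \<le> exp \<bar>y\<bar> * y^2" using calculation(2) by (simp add: mult_right_mono)
  moreover have "exp t / 2 * y^2 \<ge> 0" by simp
  ultimately show ?thesis by (simp only: abs_of_nonneg)
qed

lemma sq_exp_bound:
  fixes c x :: real assumes "c > 0" "x \<ge> 0"
  shows "x^2 * exp (- c * x) \<le> 2 / c^2"
proof -
  have "1 + c*x + (c*x)^2/2 \<le> exp (c*x)" using exp_lower_Taylor_quadratic[of "c*x"] assms by simp
  moreover have "c * x \<ge> 0" using assms by simp
  ultimately have "(c*x)^2/2 \<le> exp (c*x)" by linarith
  hence "c^2 * x^2 \<le> 2 * exp (c*x)" by (simp add: power_mult_distrib)
  hence "c^2 * (x^2 * exp (- c * x)) \<le> 2"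
    by (simp add: exp_minus field_simps)
  thus ?thesis using assms by (simp add: field_simps)
qed

lemma lin_exp_bound:
  fixes c x :: real assumes "c > 0" "x \<ge> 0"
  shows "x * exp (- c * x) \<le> 1 / c"
proof -
  have "1 + c*x \<le> exp (c*x)" using exp_ge_add_one_self[of "c*x"] by simp
  hence "c * x \<le> exp (c*x)" by linarith
  hence "c * (x * exp (- c * x)) \<le> 1" by (simp add: exp_minus field_simps)
  thus ?thesis using assms by (simp add: field_simps)
qed

lemma pointwise_taylor:
  fixes s t x :: real
  assumes "t < 0" "\<bar>s - t\<bar> \<le> - t / 4" "x \<ge> 0"
  shows "\<bar>exp (s*x) - exp (t*x) - (s - t) * (x * exp (t*x))\<bar> \<le> (s-t)^2 * (2 / (3*t/4)^2) / 2"
proof -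
  define y where "y = (s - t) * x"
  have eq: "exp (s*x) - exp (t*x) - (s - t) * (x * exp (t*x)) = exp (t*x) * (exp y - 1 - y)"
    unfolding y_def by (simp add: algebra_simps flip: exp_add)
  have "\<bar>s - t\<bar> * x \<le> (- t / 4) * x" using assms by (intro mult_right_mono) auto
  hence yb: "\<bar>y\<bar> \<le> - t * x / 4" unfolding y_def using assms
    by (simp add: abs_mult)
  have "\<bar>exp (t*x) * (exp y - 1 - y)\<bar> \<le> exp (t*x) * (exp \<bar>y\<bar> * y^2 / 2)"
    using exp_taylor2_bound[of y] by (simp add: abs_mult)
  also have "\<dots> \<le> exp (t*x) * (exp (- t * x / 4) * y^2 / 2)"
    using yb by (intro mult_left_mono divide_right_mono mult_right_mono) auto
  also have "\<dots> = (s-t)^2 * (x^2 * exp (- (- 3 * t / 4) * x)) / 2"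
  proof -
    have "exp (t*x) * exp (- t * x / 4) = exp (- (- 3 * t / 4) * x)"
      by (simp flip: exp_add)
    moreover have "y^2 = (s-t)^2 * x^2" unfolding y_def by (simp add: power_mult_distrib)
    ultimately have "exp (t*x) * (exp (- t * x / 4) * y^2 / 2) = exp (- (- 3 * t / 4) * x) * ((s-t)^2 * x^2) / 2"
      by (metis (no_types) mult.assoc times_divide_eq_right)
    thus ?thesis by (simp add: mult_ac)
  qed
  also have "\<dots> \<le> (s-t)^2 * (2 / (- 3 * t / 4)^2) / 2"
    using sq_exp_bound[of "- 3 * t / 4" x] assms
    by (intro divide_right_mono mult_left_mono) auto
  finally show ?thesis using eq by (simp add: power2_eq_square)
qed


lemma mgf_has_deriv:
  assumes P: "prob_space M" and Xm: "X \<in> borel_measurable M" and Xnn: "AE \<omega> in M. X \<omega> \<ge> 0"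
    and t: "t < 0"
  shows "(mgf M X has_real_derivative (\<integral>\<omega>. X \<omega> * exp (t * X \<omega>) \<partial>M)) (at t)"
proof -
  interpret prob_space M by (rule P)
  note Xm[measurable]
  define D where "D = (\<integral>\<omega>. X \<omega> * exp (t * X \<omega>) \<partial>M)"
  define K where "K = (2 / (3*t/4)^2) / 2"
  have intE: "integrable M (\<lambda>\<omega>. exp (s * X \<omega>))" if "s \<le> 0" for s
  proof (rule integrable_const_bound[where B=1])
    show "AE \<omega> in M. norm (exp (s * X \<omega>)) \<le> 1"
      using Xnn
    proof eventually_elim
      fix \<omega> assume "X \<omega> \<ge> 0"
      hence "s * X \<omega> \<le> 0" using that by (rule mult_nonpos_nonneg[rotated])
      thus "norm (exp (s * X \<omega>)) \<le> 1" by simp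
    qed
  qed measurable
  have intD: "integrable M (\<lambda>\<omega>. X \<omega> * exp (t * X \<omega>))"
  proof (rule integrable_const_bound[where B="1 / (- t)"])
    show "AE \<omega> in M. norm (X \<omega> * exp (t * X \<omega>)) \<le> 1 / (- t)"
      using Xnn
    proof eventually_elim
      fix \<omega> assume x: "X \<omega> \<ge> 0"
      have "norm (X \<omega> * exp (t * X \<omega>)) = X \<omega> * exp (- (- t) * X \<omega>)"
        using x by (simp add: abs_mult)
      also have "\<dots> \<le> 1 / (- t)" using lin_exp_bound[of "-t" "X \<omega>"] t x by linarith
      finally show "norm (X \<omega> * exp (t * X \<omega>)) \<le> 1 / (- t)" .
    qed
  qed measurable
  have key: "\<bar>mgf M X s - mgf M X t - (s - t) * D\<bar> \<le> (s - t)^2 * K" if st: "\<bar>s - t\<bar> \<le> - t / 4" for s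
  proof -
    have s0: "s \<le> 0" using st t by linarith
    define f where "f = (\<lambda>\<omega>. exp (s * X \<omega>) - exp (t * X \<omega>) - (s - t) * (X \<omega> * exp (t * X \<omega>)))"
    have i1: "integrable M (\<lambda>\<omega>. exp (s * X \<omega>) - exp (t * X \<omega>))"
      by (rule Bochner_Integration.integrable_diff[OF intE[OF s0] intE]) (use t in linarith)
    have intf: "integrable M f" unfolding f_def
      by (rule Bochner_Integration.integrable_diff[OF i1 Bochner_Integration.integrable_mult_right[OF intD]])
    have E1: "integral\<^sup>L M f
          = (\<integral>\<omega>. exp (s * X \<omega>) - exp (t * X \<omega>) \<partial>M) - (\<integral>\<omega>. (s - t) * (X \<omega> * exp (t * X \<omega>)) \<partial>M)"
      unfolding f_def by (rule Bochner_Integration.integral_diff[OF i1 Bochner_Integration.integrable_mult_right[OF intD]])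
    have E2: "(\<integral>\<omega>. exp (s * X \<omega>) - exp (t * X \<omega>) \<partial>M) = mgf M X s - mgf M X t"
      unfolding mgf_def by (rule Bochner_Integration.integral_diff[OF intE[OF s0] intE]) (use t in linarith)
    have E3: "(\<integral>\<omega>. (s - t) * (X \<omega> * exp (t * X \<omega>)) \<partial>M) = (s - t) * D"
      unfolding D_def by (rule Bochner_Integration.integral_mult_right_zero)
    have eq: "mgf M X s - mgf M X t - (s - t) * D = integral\<^sup>L M f"
      by (simp only: E1 E2 E3)
    have N: "\<bar>integral\<^sup>L M f\<bar> \<le> (\<integral>\<omega>. \<bar>f \<omega>\<bar> \<partial>M)"
      using integral_norm_bound[of M f] by (simp only: real_norm_def)
    have Mo: "(\<integral>\<omega>. \<bar>f \<omega>\<bar> \<partial>M) \<le> (\<integral>\<omega>. (s - t)^2 * K \<partial>M)"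
    proof (rule integral_mono_AE)
      show "integrable M (\<lambda>\<omega>. \<bar>f \<omega>\<bar>)"
        by (rule integrable_abs[OF intf])
      show "AE \<omega> in M. \<bar>f \<omega>\<bar> \<le> (s - t)^2 * K"
        using Xnn
      proof eventually_elim
        fix \<omega> assume x: "X \<omega> \<ge> 0"
        show "\<bar>f \<omega>\<bar> \<le> (s - t)^2 * K"
          using pointwise_taylor[OF t st x] unfolding K_def f_def by (simp only: mult.assoc)
      qed
    qed (rule integrable_const)
    have C: "(\<integral>\<omega>. (s - t)^2 * K \<partial>M) = (s - t)^2 * K" by (simp add: prob_space)
    show ?thesis unfolding eq using N Mo C by linarith
  qed
  have "((\<lambda>s. (mgf M X s - mgf M X t) / (s - t) - D) \<longlongrightarrow> 0) (at t)"
  proof (rule Lim_null_comparison)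
    show "\<forall>\<^sub>F s in at t. norm ((mgf M X s - mgf M X t) / (s - t) - D) \<le> \<bar>s - t\<bar> * K"
      unfolding eventually_at
    proof (intro exI[of _ "- t / 4"] conjI ballI impI)
      show "0 < - t / 4" using t by simp
      fix s assume "s \<in> UNIV" "s \<noteq> t \<and> dist s t < - t / 4"
      hence ne: "s \<noteq> t" and st: "\<bar>s - t\<bar> \<le> - t / 4" by (auto simp: dist_real_def)
      have e1: "(mgf M X s - mgf M X t) / (s - t) - D = (mgf M X s - mgf M X t - (s - t) * D) / (s - t)"
        using ne by (simp add: diff_divide_distrib)
      have e2: "norm ((mgf M X s - mgf M X t - (s - t) * D) / (s - t)) = \<bar>mgf M X s - mgf M X t - (s - t) * D\<bar> / \<bar>s - t\<bar>"
        by (simp only: real_norm_def abs_divide)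
      have e3: "\<bar>mgf M X s - mgf M X t - (s - t) * D\<bar> / \<bar>s - t\<bar> \<le> (s - t)^2 * K / \<bar>s - t\<bar>"
        by (rule divide_right_mono[OF key[OF st] abs_ge_zero])
      have sq: "(s - t)^2 = \<bar>s - t\<bar> * \<bar>s - t\<bar>" by (simp add: power2_eq_square)
      have nz: "\<bar>s - t\<bar> \<noteq> 0" using ne by simp
      have e4: "(s - t)^2 * K / \<bar>s - t\<bar> = \<bar>s - t\<bar> * K" unfolding sq mult.assoc
        using nz by (simp del: abs_mult_self_eq)
      show "norm ((mgf M X s - mgf M X t) / (s - t) - D) \<le> \<bar>s - t\<bar> * K"
        unfolding e1 e2 using e3 e4 by linarith
    qed
    have "((\<lambda>s. \<bar>s - t\<bar> * K) \<longlongrightarrow> \<bar>t - t\<bar> * K) (at t)"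
      by (intro tendsto_intros)
    thus "((\<lambda>s. \<bar>s - t\<bar> * K) \<longlongrightarrow> 0) (at t)" by simp
  qed
  hence "((\<lambda>s. (mgf M X s - mgf M X t) / (s - t)) \<longlongrightarrow> D) (at t)"
    by (rule LIM_zero_cancel)
  thus ?thesis unfolding D_def by (simp add: has_field_derivative_iff)
qed




lemma intLexp:
  fixes L :: "'a \<Rightarrow> real"
  assumes P: "prob_space M" and Lm: "L \<in> borel_measurable M" and Lnn: "AE \<omega> in M. L \<omega> \<ge> 0"
    and Lint: "integrable M L" and v: "v \<ge> 0"
  shows "integrable M (\<lambda>\<omega>. L \<omega> * exp (- (L \<omega> * v)))"
proof (rule Bochner_Integration.integrable_bound[OF Lint])
  show "(\<lambda>\<omega>. L \<omega> * exp (- (L \<omega> * v))) \<in> borel_measurable M" using Lm by measurable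
  show "AE \<omega> in M. norm (L \<omega> * exp (- (L \<omega> * v))) \<le> norm (L \<omega>)"
    using Lnn
  proof eventually_elim
    fix \<omega> assume l: "L \<omega> \<ge> 0"
    have "L \<omega> * v \<ge> 0" using l v by simp
    hence "exp (- (L \<omega> * v)) \<le> 1" by simp
    hence "L \<omega> * exp (- (L \<omega> * v)) \<le> L \<omega>" using l by (simp add: mult_left_le)
    thus "norm (L \<omega> * exp (- (L \<omega> * v))) \<le> norm (L \<omega>)" using l by simp
  qed
qed

lemma cheb:
  fixes L :: "'a \<Rightarrow> real"
  assumes P: "prob_space M" and Lm: "L \<in> borel_measurable M" and Lnn: "AE \<omega> in M. L \<omega> \<ge> 0"
    and Lint: "integrable M L" and \<Delta>: "\<Delta> > 0" and u: "u \<ge> 0"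
    and m1: "(\<integral>\<omega>. L \<omega> \<partial>M) > 0"
    and mg: "(\<integral>\<omega>. L \<omega> * exp (- (L \<omega> * \<Delta>)) \<partial>M) > 0"
  shows "(\<integral>\<omega>. L \<omega> * exp (- (L \<omega> * u)) \<partial>M) * (\<integral>\<omega>. L \<omega> * exp (- (L \<omega> * \<Delta>)) \<partial>M)
      \<le> (\<integral>\<omega>. L \<omega> \<partial>M) * (\<integral>\<omega>. L \<omega> * exp (- (L \<omega> * (u + \<Delta>))) \<partial>M)"
proof -
  define m where "m = (\<integral>\<omega>. L \<omega> \<partial>M)"
  define g where "g = (\<integral>\<omega>. L \<omega> * exp (- (L \<omega> * \<Delta>)) \<partial>M)"
  define Iu where "Iu = (\<integral>\<omega>. L \<omega> * exp (- (L \<omega> * u)) \<partial>M)"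
  define Iud where "Iud = (\<integral>\<omega>. L \<omega> * exp (- (L \<omega> * (u + \<Delta>))) \<partial>M)"
  define c where "c = g / m"
  have mpos: "m > 0" and gpos: "g > 0" using m1 mg by (simp_all add: m_def g_def)
  have cpos: "c > 0" unfolding c_def using mpos gpos by simp
  define l0 where "l0 = - ln c / \<Delta>"
  have el0: "exp (- (l0 * \<Delta>)) = c" unfolding l0_def using \<Delta> cpos by simp
  define e0 where "e0 = exp (- (l0 * u))"
  define f where "f = (\<lambda>\<omega>. L \<omega> * (exp (- (L \<omega> * u)) - e0) * (exp (- (L \<omega> * \<Delta>)) - c))"
  have i1: "integrable M (\<lambda>\<omega>. L \<omega> * exp (- (L \<omega> * (u + \<Delta>))))"
    by (rule intLexp[OF P Lm Lnn Lint]) (use u \<Delta> in simp)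
  have i2: "integrable M (\<lambda>\<omega>. L \<omega> * exp (- (L \<omega> * u)))"
    by (rule intLexp[OF P Lm Lnn Lint u])
  have i3: "integrable M (\<lambda>\<omega>. L \<omega> * exp (- (L \<omega> * \<Delta>)))"
    by (rule intLexp[OF P Lm Lnn Lint]) (use \<Delta> in simp)
  have feq: "f \<omega> = L \<omega> * exp (- (L \<omega> * (u + \<Delta>))) - c * (L \<omega> * exp (- (L \<omega> * u)))
      - e0 * (L \<omega> * exp (- (L \<omega> * \<Delta>))) + (e0 * c) * L \<omega>" for \<omega>
  proof -
    have "exp (- (L \<omega> * (u + \<Delta>))) = exp (- (L \<omega> * u)) * exp (- (L \<omega> * \<Delta>))"
      by (simp add: distrib_left flip: exp_add)
    thus ?thesis unfolding f_def by (simp add: algebra_simps)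
  qed
  have "integral\<^sup>L M f = (\<integral>\<omega>. L \<omega> * exp (- (L \<omega> * (u + \<Delta>))) - c * (L \<omega> * exp (- (L \<omega> * u)))
      - e0 * (L \<omega> * exp (- (L \<omega> * \<Delta>))) + (e0 * c) * L \<omega> \<partial>M)"
    by (rule arg_cong[where f="integral\<^sup>L M"]) (rule ext, rule feq)
  also have "\<dots> = Iud - c * Iu - e0 * g + (e0 * c) * m"
    unfolding Iud_def Iu_def g_def m_def
    using i1 i2 i3 Lint by simp
  also have "\<dots> = Iud - c * Iu" unfolding c_def using mpos by simp
  finally have fint: "integral\<^sup>L M f = Iud - c * Iu" .
  have "integral\<^sup>L M f \<ge> 0"
  proof (rule integral_nonneg_AE)
    show "AE \<omega> in M. 0 \<le> f \<omega>"
      using Lnn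
    proof eventually_elim
      fix \<omega> assume l: "L \<omega> \<ge> 0"
      show "0 \<le> f \<omega>"
      proof (cases "L \<omega> \<ge> l0")
        case True
        have a: "exp (- (L \<omega> * u)) - e0 \<le> 0" unfolding e0_def using True u
          by (simp add: mult_right_mono)
        have b: "exp (- (L \<omega> * \<Delta>)) - c \<le> 0" unfolding el0[symmetric] using True \<Delta>
          by (simp add: mult_right_mono)
        have "0 \<le> (exp (- (L \<omega> * u)) - e0) * (exp (- (L \<omega> * \<Delta>)) - c)"
          using a b by (rule mult_nonpos_nonpos)
        thus ?thesis unfolding f_def using l by (simp add: mult.assoc)
      next
        case False
        have a: "exp (- (L \<omega> * u)) - e0 \<ge> 0" unfolding e0_def using False u
          by (simp add: mult_right_mono)
        have b: "exp (- (L \<omega> * \<Delta>)) - c \<ge> 0" unfolding el0[symmetric] using False \<Delta>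
          by (simp add: mult_right_mono)
        have "0 \<le> (exp (- (L \<omega> * u)) - e0) * (exp (- (L \<omega> * \<Delta>)) - c)"
          using a b by simp
        thus ?thesis unfolding f_def using l by (simp add: mult.assoc)
      qed
    qed
  qed
  hence "c * Iu \<le> Iud" using fint by simp
  hence "m * (c * Iu) \<le> m * Iud" using mpos by simp
  moreover have "m * (c * Iu) = Iu * g" unfolding c_def using mpos by simp
  ultimately show ?thesis unfolding m_def g_def Iu_def Iud_def by simp
qed




lemma lap_nn_le1:
  fixes l :: real assumes l: "l > 0"
  shows "(\<integral>\<^sup>+w. ennreal (laplace_density l w) \<partial>lborel) \<le> 1"
proof -
  define e where "e = exponential_density l"
  have em[measurable]: "e \<in> borel_measurable borel" unfolding e_def exponential_density_def by measurable
  have one: "(\<integral>\<^sup>+x. ennreal (e x) \<partial>lborel) = 1"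
  proof -
    interpret prob_space "density lborel (exponential_density l)"
      by (rule prob_space_exponential_density[OF l])
    have "emeasure (density lborel (exponential_density l)) (space (density lborel (exponential_density l))) = 1"
      by (rule emeasure_space_1)
    thus ?thesis unfolding e_def by (simp add: emeasure_density)
  qed
  have half: "(\<integral>\<^sup>+x. ennreal (e x / 2) \<partial>lborel) = ennreal (1/2)"
  proof -
    have "(\<integral>\<^sup>+x. ennreal (e x / 2) \<partial>lborel) = (\<integral>\<^sup>+x. ennreal (1/2) * ennreal (e x) \<partial>lborel)"
    proof (rule nn_integral_cong)
      fix x
      have "e x \<ge> 0" unfolding e_def using exponential_density_nonneg[OF l] by auto
      hence "ennreal (1/2 * e x) = ennreal (1/2) * ennreal (e x)" by (intro ennreal_mult) auto
      thus "ennreal (e x / 2) = ennreal (1/2) * ennreal (e x)" by simp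
    qed
    also have "\<dots> = ennreal (1/2) * (\<integral>\<^sup>+x. ennreal (e x) \<partial>lborel)"
      by (rule nn_integral_cmult) measurable
    finally show ?thesis using one by simp
  qed
  have half': "(\<integral>\<^sup>+x. ennreal (e (- x) / 2) \<partial>lborel) = ennreal (1/2)"
  proof -
    have "(\<integral>\<^sup>+x. ennreal (e x / 2) \<partial>lborel) = ennreal \<bar>- 1\<bar> * (\<integral>\<^sup>+x. ennreal (e (0 + (- 1) * x) / 2) \<partial>lborel)"
      by (rule nn_integral_real_affine) measurable
    thus ?thesis using half by simp
  qed
  have pw: "ennreal (laplace_density l w) \<le> ennreal (e w / 2) + ennreal (e (- w) / 2)" for w
  proof -
    have "laplace_density l w \<le> e w / 2 + e (- w) / 2"
      unfolding laplace_density_def e_def exponential_density_def using l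
      by (cases "w < 0") (auto simp: abs_if mult.commute)
    moreover have "e w \<ge> 0" "e (- w) \<ge> 0" unfolding e_def using exponential_density_nonneg[OF l] by auto
    ultimately show ?thesis by (simp add: ennreal_plus[symmetric] del: ennreal_plus)
  qed
  have "(\<integral>\<^sup>+w. ennreal (laplace_density l w) \<partial>lborel)
      \<le> (\<integral>\<^sup>+w. ennreal (e w / 2) + ennreal (e (- w) / 2) \<partial>lborel)"
    by (rule nn_integral_mono) (rule pw)
  also have "\<dots> = (\<integral>\<^sup>+w. ennreal (e w / 2) \<partial>lborel) + (\<integral>\<^sup>+w. ennreal (e (- w) / 2) \<partial>lborel)"
    by (rule nn_integral_add) measurable
  also have "\<dots> = ennreal (1/2 + 1/2)" unfolding half half' by (rule ennreal_plus[symmetric]) auto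
  also have "\<dots> = 1" by simp
  finally show ?thesis .
qed




lemma int_pos:
  fixes f :: "'a \<Rightarrow> real"
  assumes P: "prob_space M" and fi: "integrable M f" and pos: "AE \<omega> in M. f \<omega> > 0"
  shows "(\<integral>\<omega>. f \<omega> \<partial>M) > 0"
proof -
  interpret prob_space M by (rule P)
  have nn: "AE \<omega> in M. 0 \<le> f \<omega>" using pos by eventually_elim simp
  have ge: "(\<integral>\<omega>. f \<omega> \<partial>M) \<ge> 0" by (rule integral_nonneg_AE[OF nn])
  have "(\<integral>\<omega>. f \<omega> \<partial>M) \<noteq> 0"
  proof
    assume "(\<integral>\<omega>. f \<omega> \<partial>M) = 0"
    hence "AE \<omega> in M. f \<omega> = 0" using integral_nonneg_eq_0_iff_AE[OF fi nn] by simp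
    hence "AE \<omega> in M. False" using pos by eventually_elim simp
    thus False by (simp add: AE_False)
  qed
  thus ?thesis using ge by linarith
qed

lemma pointwise_H:
  fixes L :: "'a \<Rightarrow> real"
  assumes P: "prob_space M" and Lm: "L \<in> borel_measurable M" and Lpos: "AE \<omega> in M. L \<omega> > 0"
    and Lint: "integrable M L" and \<Delta>: "\<Delta> > 0" and v: "\<bar>v\<bar> \<le> \<bar>w\<bar> + \<Delta>"
  shows "(\<integral>\<omega>. laplace_density (L \<omega>) w \<partial>M)
     \<le> ((\<integral>\<omega>. L \<omega> \<partial>M) / (\<integral>\<omega>. L \<omega> * exp (- (L \<omega> * \<Delta>)) \<partial>M)) * (\<integral>\<omega>. laplace_density (L \<omega>) v \<partial>M)"
proof -
  interpret prob_space M by (rule P)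
  have Lnn: "AE \<omega> in M. L \<omega> \<ge> 0" using Lpos by eventually_elim simp
  define m where "m = (\<integral>\<omega>. L \<omega> \<partial>M)"
  define g where "g = (\<integral>\<omega>. L \<omega> * exp (- (L \<omega> * \<Delta>)) \<partial>M)"
  have mpos: "m > 0" unfolding m_def by (rule int_pos[OF P Lint Lpos])
  have gpos: "g > 0" unfolding g_def
  proof (rule int_pos[OF P])
    show "integrable M (\<lambda>\<omega>. L \<omega> * exp (- (L \<omega> * \<Delta>)))"
      by (rule intLexp[OF P Lm Lnn Lint]) (use \<Delta> in simp)
    show "AE \<omega> in M. L \<omega> * exp (- (L \<omega> * \<Delta>)) > 0" using Lpos by eventually_elim simp
  qed
  have lapeq: "laplace_density l x = l * exp (- (l * \<bar>x\<bar>)) / 2" for l x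
    unfolding laplace_density_def by simp
  have ch: "(\<integral>\<omega>. L \<omega> * exp (- (L \<omega> * \<bar>w\<bar>)) \<partial>M) * g
      \<le> m * (\<integral>\<omega>. L \<omega> * exp (- (L \<omega> * (\<bar>w\<bar> + \<Delta>))) \<partial>M)"
    unfolding m_def g_def
    by (rule cheb[OF P Lm Lnn Lint \<Delta> abs_ge_zero]) (use mpos gpos in \<open>simp_all add: m_def g_def\<close>)
  have mono: "(\<integral>\<omega>. L \<omega> * exp (- (L \<omega> * (\<bar>w\<bar> + \<Delta>))) \<partial>M) \<le> (\<integral>\<omega>. L \<omega> * exp (- (L \<omega> * \<bar>v\<bar>)) \<partial>M)"
  proof (rule integral_mono_AE)
    show "integrable M (\<lambda>\<omega>. L \<omega> * exp (- (L \<omega> * (\<bar>w\<bar> + \<Delta>))))"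
      by (rule intLexp[OF P Lm Lnn Lint]) (use \<Delta> in simp)
    show "integrable M (\<lambda>\<omega>. L \<omega> * exp (- (L \<omega> * \<bar>v\<bar>)))"
      by (rule intLexp[OF P Lm Lnn Lint]) simp
    show "AE \<omega> in M. L \<omega> * exp (- (L \<omega> * (\<bar>w\<bar> + \<Delta>))) \<le> L \<omega> * exp (- (L \<omega> * \<bar>v\<bar>))"
      using Lnn
    proof eventually_elim
      fix \<omega> assume l: "L \<omega> \<ge> 0"
      have "L \<omega> * \<bar>v\<bar> \<le> L \<omega> * (\<bar>w\<bar> + \<Delta>)" using l v by (rule mult_left_mono[rotated])
      hence "exp (- (L \<omega> * (\<bar>w\<bar> + \<Delta>))) \<le> exp (- (L \<omega> * \<bar>v\<bar>))" by simp
      thus "L \<omega> * exp (- (L \<omega> * (\<bar>w\<bar> + \<Delta>))) \<le> L \<omega> * exp (- (L \<omega> * \<bar>v\<bar>))"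
        using l by (rule mult_left_mono)
    qed
  qed
  define Iw where "Iw = (\<integral>\<omega>. L \<omega> * exp (- (L \<omega> * \<bar>w\<bar>)) \<partial>M)"
  define Iv where "Iv = (\<integral>\<omega>. L \<omega> * exp (- (L \<omega> * \<bar>v\<bar>)) \<partial>M)"
  have "Iw * g \<le> m * Iv" using ch mono mpos unfolding Iw_def Iv_def
    by (meson mult_left_mono less_imp_le order_trans)
  hence key: "Iw \<le> m / g * Iv" using gpos by (simp add: field_simps)
  have e1: "(\<integral>\<omega>. laplace_density (L \<omega>) w \<partial>M) = Iw / 2"
    unfolding lapeq Iw_def by (rule integral_divide_zero)
  have e2: "(\<integral>\<omega>. laplace_density (L \<omega>) v \<partial>M) = Iv / 2"
    unfolding lapeq Iv_def by (rule integral_divide_zero)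
  show ?thesis unfolding e1 e2 m_def[symmetric] g_def[symmetric] using key by simp
qed




lemma mech_ineq:
  fixes L W :: "'a \<Rightarrow> real" and c c' \<Delta> :: real
  assumes P: "prob_space M" and Lm[measurable]: "L \<in> borel_measurable M" and Lpos: "AE \<omega> in M. L \<omega> > 0"
    and Lint: "integrable M L" and Wm[measurable]: "W \<in> borel_measurable M" and \<Delta>: "\<Delta> > 0"
    and cc: "\<bar>c - c'\<bar> \<le> \<Delta>" and S[measurable]: "S \<in> sets borel"
    and joint: "\<And>A B. A \<in> sets borel \<Longrightarrow> B \<in> sets borel \<Longrightarrow>
           measure M {\<omega> \<in> space M. L \<omega> \<in> A \<and> W \<omega> \<in> B}
             = (\<integral>\<omega>. indicator A (L \<omega>) * (LINT w:B|lborel. laplace_density (L \<omega>) w) \<partial>M)"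
  shows "measure M {\<omega> \<in> space M. c + W \<omega> \<in> S}
     \<le> ((\<integral>\<omega>. L \<omega> \<partial>M) / (\<integral>\<omega>. L \<omega> * exp (- (L \<omega> * \<Delta>)) \<partial>M)) * measure M {\<omega> \<in> space M. c' + W \<omega> \<in> S}"
proof -
  interpret prob_space M by (rule P)
  interpret pair_sigma_finite M lborel by unfold_locales
  have Lnn: "AE \<omega> in M. L \<omega> \<ge> 0" using Lpos by eventually_elim simp
  define r where "r = (\<integral>\<omega>. L \<omega> \<partial>M) / (\<integral>\<omega>. L \<omega> * exp (- (L \<omega> * \<Delta>)) \<partial>M)"
  have mpos: "(\<integral>\<omega>. L \<omega> \<partial>M) > 0" by (rule int_pos[OF P Lint Lpos])
  have gpos: "(\<integral>\<omega>. L \<omega> * exp (- (L \<omega> * \<Delta>)) \<partial>M) > 0"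
  proof (rule int_pos[OF P])
    show "integrable M (\<lambda>\<omega>. L \<omega> * exp (- (L \<omega> * \<Delta>)))"
      by (rule intLexp[OF P Lm Lnn Lint]) (use \<Delta> in simp)
    show "AE \<omega> in M. L \<omega> * exp (- (L \<omega> * \<Delta>)) > 0" using Lpos by eventually_elim simp
  qed
  have r0: "r \<ge> 0" unfolding r_def using mpos gpos by simp
  define Bs where "Bs x = {w. x + w \<in> S}" for x :: real
  have Bsb[measurable]: "Bs x \<in> sets borel" for x
  proof -
    have "(\<lambda>w. x + w) \<in> borel_measurable borel" by simp
    from measurable_sets[OF this S] show ?thesis unfolding Bs_def by (simp add: vimage_def)
  qed
  have lapm[measurable]: "(\<lambda>(l, w). laplace_density l w) \<in> borel_measurable (borel \<Otimes>\<^sub>M borel)"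
    unfolding laplace_density_def by measurable
  have lapm2[measurable]: "(\<lambda>x. laplace_density (f x) (g x)) \<in> borel_measurable N"
    if [measurable]: "f \<in> borel_measurable N" "g \<in> borel_measurable N" for f g and N :: "'b measure"
    unfolding laplace_density_def by measurable
  have lapnn: "l > 0 \<Longrightarrow> laplace_density l w \<ge> 0" for l w unfolding laplace_density_def by simp
  define G where "G x \<omega> = (\<integral>\<^sup>+w. ennreal (indicator (Bs x) w * laplace_density (L \<omega>) w) \<partial>lborel)" for x \<omega>
  define H where "H w = (\<integral>\<^sup>+\<omega>. ennreal (laplace_density (L \<omega>) w) \<partial>M)" for w
  have Gm[measurable]: "G x \<in> borel_measurable M" for x unfolding G_def by measurable
  have Hm[measurable]: "H \<in> borel_measurable borel" unfolding H_def by measurable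
  have Gle: "G x \<omega> \<le> 1" if "L \<omega> > 0" for x \<omega>
  proof -
    have "G x \<omega> \<le> (\<integral>\<^sup>+w. ennreal (laplace_density (L \<omega>) w) \<partial>lborel)"
      unfolding G_def
    proof (rule nn_integral_mono)
      fix w show "ennreal (indicator (Bs x) w * laplace_density (L \<omega>) w) \<le> ennreal (laplace_density (L \<omega>) w)"
        using lapnn[OF that, of w] by (cases "w \<in> Bs x") auto
    qed
    also have "\<dots> \<le> 1" by (rule lap_nn_le1[OF that])
    finally show ?thesis .
  qed
  have step1: "measure M {\<omega> \<in> space M. x + W \<omega> \<in> S} = enn2real (\<integral>\<^sup>+\<omega>. G x \<omega> \<partial>M)" for x
  proof -
    have set: "{\<omega> \<in> space M. x + W \<omega> \<in> S} = {\<omega> \<in> space M. L \<omega> \<in> UNIV \<and> W \<omega> \<in> Bs x}"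
      by (auto simp: Bs_def)
    have "measure M {\<omega> \<in> space M. x + W \<omega> \<in> S}
        = (\<integral>\<omega>. indicator UNIV (L \<omega>) * (LINT w:Bs x|lborel. laplace_density (L \<omega>) w) \<partial>M)"
      unfolding set by (rule joint) auto
    also have "\<dots> = (\<integral>\<omega>. enn2real (G x \<omega>) \<partial>M)"
    proof (rule integral_cong_AE)
      show "(\<lambda>\<omega>. indicator UNIV (L \<omega>) * (LINT w:Bs x|lborel. laplace_density (L \<omega>) w)) \<in> borel_measurable M"
        unfolding set_lebesgue_integral_def by measurable
      show "(\<lambda>\<omega>. enn2real (G x \<omega>)) \<in> borel_measurable M" by measurable
      show "AE \<omega> in M. indicator UNIV (L \<omega>) * (LINT w:Bs x|lborel. laplace_density (L \<omega>) w) = enn2real (G x \<omega>)"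
        using Lpos
      proof eventually_elim
        fix \<omega> assume l: "L \<omega> > 0"
        have "(LINT w:Bs x|lborel. laplace_density (L \<omega>) w)
            = (\<integral>w. indicator (Bs x) w * laplace_density (L \<omega>) w \<partial>lborel)"
          unfolding set_lebesgue_integral_def by simp
        also have "\<dots> = enn2real (G x \<omega>)" unfolding G_def
        proof (rule integral_eq_nn_integral)
          show "(\<lambda>w. indicator (Bs x) w * laplace_density (L \<omega>) w) \<in> borel_measurable lborel" by measurable
          show "AE w in lborel. 0 \<le> indicator (Bs x) w * laplace_density (L \<omega>) w"
            using lapnn[OF l] by simp
        qed
        finally show "indicator UNIV (L \<omega>) * (LINT w:Bs x|lborel. laplace_density (L \<omega>) w) = enn2real (G x \<omega>)"
          by simp
      qed
    qed
    also have "\<dots> = enn2real (\<integral>\<^sup>+\<omega>. ennreal (enn2real (G x \<omega>)) \<partial>M)"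
      by (rule integral_eq_nn_integral) auto
    also have "(\<integral>\<^sup>+\<omega>. ennreal (enn2real (G x \<omega>)) \<partial>M) = (\<integral>\<^sup>+\<omega>. G x \<omega> \<partial>M)"
    proof (rule nn_integral_cong_AE)
      show "AE \<omega> in M. ennreal (enn2real (G x \<omega>)) = G x \<omega>"
        using Lpos
      proof eventually_elim
        fix \<omega> assume "L \<omega> > 0"
        hence "G x \<omega> < top" using Gle[of \<omega> x] by (simp add: le_less_trans)
        thus "ennreal (enn2real (G x \<omega>)) = G x \<omega>" by simp
      qed
    qed
    finally show ?thesis .
  qed
  have step2: "(\<integral>\<^sup>+\<omega>. G x \<omega> \<partial>M) = (\<integral>\<^sup>+w. indicator (Bs x) w * H w \<partial>lborel)" for x
  proof -
    have "(\<integral>\<^sup>+\<omega>. G x \<omega> \<partial>M)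
        = (\<integral>\<^sup>+w. (\<integral>\<^sup>+\<omega>. ennreal (indicator (Bs x) w * laplace_density (L \<omega>) w) \<partial>M) \<partial>lborel)"
      unfolding G_def by (rule Fubini'[symmetric]) measurable
    also have "\<dots> = (\<integral>\<^sup>+w. indicator (Bs x) w * H w \<partial>lborel)"
    proof (rule nn_integral_cong)
      fix w
      have "(\<integral>\<^sup>+\<omega>. ennreal (indicator (Bs x) w * laplace_density (L \<omega>) w) \<partial>M)
          = (\<integral>\<^sup>+\<omega>. indicator (Bs x) w * ennreal (laplace_density (L \<omega>) w) \<partial>M)"
        by (rule nn_integral_cong) (cases "w \<in> Bs x", auto)
      also have "\<dots> = indicator (Bs x) w * H w" unfolding H_def
        by (rule nn_integral_cmult) measurable
      finally show "(\<integral>\<^sup>+\<omega>. ennreal (indicator (Bs x) w * laplace_density (L \<omega>) w) \<partial>M) = indicator (Bs x) w * H w" .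
    qed
    finally show ?thesis .
  qed
  define \<delta> where "\<delta> = c - c'"
  have step3: "H w \<le> ennreal r * H (\<delta> + w)" for w
  proof -
    have Hint: "H v = ennreal (\<integral>\<omega>. laplace_density (L \<omega>) v \<partial>M)" for v
      unfolding H_def
    proof (rule nn_integral_eq_integral)
      have "integrable M (\<lambda>\<omega>. L \<omega> * exp (- (L \<omega> * \<bar>v\<bar>)) / 2)"
        using intLexp[OF P Lm Lnn Lint, of "\<bar>v\<bar>"] by simp
      thus "integrable M (\<lambda>\<omega>. laplace_density (L \<omega>) v)"
        unfolding laplace_density_def by (simp add: mult.commute)
      show "AE \<omega> in M. 0 \<le> laplace_density (L \<omega>) v" using Lpos by eventually_elim (rule lapnn)
    qed
    have v: "\<bar>\<delta> + w\<bar> \<le> \<bar>w\<bar> + \<Delta>" using cc unfolding \<delta>_def by linarith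
    have pw: "(\<integral>\<omega>. laplace_density (L \<omega>) w \<partial>M) \<le> r * (\<integral>\<omega>. laplace_density (L \<omega>) (\<delta> + w) \<partial>M)"
      unfolding r_def by (rule pointwise_H[OF P Lm Lpos Lint \<Delta> v])
    have "AE \<omega> in M. 0 \<le> laplace_density (L \<omega>) (\<delta> + w)" using Lpos by eventually_elim (rule lapnn)
    hence nn: "(\<integral>\<omega>. laplace_density (L \<omega>) (\<delta> + w) \<partial>M) \<ge> 0"
      by (rule integral_nonneg_AE)
    show ?thesis unfolding Hint using pw r0 nn by (simp add: ennreal_mult'[symmetric] ennreal_leI)
  qed
  have ind: "indicator (Bs c) w = (indicator (Bs c') (\<delta> + w) :: ennreal)" for w
    unfolding Bs_def \<delta>_def by (simp add: indicator_def algebra_simps)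
  have step4: "(\<integral>\<^sup>+w. indicator (Bs c) w * H w \<partial>lborel) \<le> ennreal r * (\<integral>\<^sup>+w. indicator (Bs c') w * H w \<partial>lborel)"
  proof -
    have "(\<integral>\<^sup>+w. indicator (Bs c) w * H w \<partial>lborel) \<le> (\<integral>\<^sup>+w. ennreal r * (indicator (Bs c') (\<delta> + w) * H (\<delta> + w)) \<partial>lborel)"
    proof (rule nn_integral_mono)
      fix w
      have "indicator (Bs c) w * H w \<le> indicator (Bs c) w * (ennreal r * H (\<delta> + w))"
        by (rule mult_left_mono[OF step3]) simp
      thus "indicator (Bs c) w * H w \<le> ennreal r * (indicator (Bs c') (\<delta> + w) * H (\<delta> + w))"
        unfolding ind by (simp add: mult_ac)
    qed
    also have "\<dots> = ennreal r * (\<integral>\<^sup>+w. indicator (Bs c') (\<delta> + w) * H (\<delta> + w) \<partial>lborel)"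
      by (rule nn_integral_cmult) measurable
    also have "(\<integral>\<^sup>+w. indicator (Bs c') (\<delta> + w) * H (\<delta> + w) \<partial>lborel) = (\<integral>\<^sup>+w. indicator (Bs c') w * H w \<partial>lborel)"
      using nn_integral_real_affine[of "\<lambda>w. indicator (Bs c') w * H w" 1 \<delta>] by simp
    finally show ?thesis .
  qed
  have fin: "(\<integral>\<^sup>+\<omega>. G c' \<omega> \<partial>M) < top"
  proof -
    have "AE \<omega> in M. G c' \<omega> \<le> 1" using Lpos by eventually_elim (rule Gle)
    hence "(\<integral>\<^sup>+\<omega>. G c' \<omega> \<partial>M) \<le> (\<integral>\<^sup>+\<omega>. 1 \<partial>M)"
      by (rule nn_integral_mono_AE)
    also have "\<dots> = 1" by (simp add: emeasure_space_1)
    finally show ?thesis by (simp add: le_less_trans)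
  qed
  have "(\<integral>\<^sup>+\<omega>. G c \<omega> \<partial>M) \<le> ennreal r * (\<integral>\<^sup>+\<omega>. G c' \<omega> \<partial>M)"
    unfolding step2 by (rule step4)
  hence "enn2real (\<integral>\<^sup>+\<omega>. G c \<omega> \<partial>M) \<le> enn2real (ennreal r * (\<integral>\<^sup>+\<omega>. G c' \<omega> \<partial>M))"
    by (rule enn2real_mono) (use fin in \<open>simp add: ennreal_mult_less_top\<close>)
  also have "\<dots> = r * enn2real (\<integral>\<^sup>+\<omega>. G c' \<omega> \<partial>M)" using r0 by (simp add: enn2real_mult)
  finally show ?thesis unfolding step1 r_def .
qed




lemma term_eq:
  fixes X :: "nat \<Rightarrow> 'a \<Rightarrow> real" and a :: "nat \<Rightarrow> real"
  assumes P: "prob_space M" and Xm: "\<And>i. i < n \<Longrightarrow> X i \<in> borel_measurable M"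
    and indep: "prob_space.indep_vars M (\<lambda>_. borel) X {..<n}"
    and Xnn: "\<And>i. i < n \<Longrightarrow> AE \<omega> in M. X i \<omega> \<ge> 0"
    and Xint: "\<And>i. i < n \<Longrightarrow> integrable M (X i)"
    and ann: "\<And>i. i < n \<Longrightarrow> a i \<ge> 0" and \<Delta>: "\<Delta> > 0" and j: "j < n"
  shows "a j * deriv (mgf M (X j)) (- a j * \<Delta>) * (\<Prod>i\<in>{..<n} - {j}. mgf M (X i) (- a i * \<Delta>))
    = a j * (\<integral>\<omega>. X j \<omega> * exp (- ((\<Sum>i<n. a i * X i \<omega>) * \<Delta>)) \<partial>M)"
proof (cases "a j = 0")
  case True thus ?thesis by simp
next
  case False
  interpret prob_space M by (rule P)
  have aj: "a j > 0" using False ann[OF j] by simp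
  define t where "t = - a j * \<Delta>"
  have t: "t < 0" unfolding t_def using aj \<Delta> by simp
  have der: "deriv (mgf M (X j)) t = (\<integral>\<omega>. X j \<omega> * exp (t * X j \<omega>) \<partial>M)"
    by (rule DERIV_imp_deriv[OF mgf_has_deriv[OF P Xm[OF j] Xnn[OF j] t]])
  define h where "h i x = (if i = j then x * exp ((- a i * \<Delta>) * x) else exp ((- a i * \<Delta>) * x))" for i x
  have hm: "h i \<in> borel_measurable borel" for i unfolding h_def by measurable
  have ind2: "indep_vars (\<lambda>_. borel) (\<lambda>i \<omega>. h i (X i \<omega>)) {..<n}"
    by (rule indep_vars_compose2[OF indep]) (rule hm)
  have hint: "integrable M (\<lambda>\<omega>. h i (X i \<omega>))" if i: "i \<in> {..<n}" for i
  proof -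
    have i': "i < n" using i by simp
    note Xm[OF i', measurable]
    have si: "- a i * \<Delta> \<le> 0" using ann[OF i'] \<Delta> by simp
    show ?thesis
    proof (cases "i = j")
      case True
      show ?thesis
      proof (rule Bochner_Integration.integrable_bound[OF Xint[OF i']])
        show "(\<lambda>\<omega>. h i (X i \<omega>)) \<in> borel_measurable M" unfolding h_def by measurable
        show "AE \<omega> in M. norm (h i (X i \<omega>)) \<le> norm (X i \<omega>)"
          using Xnn[OF i']
        proof eventually_elim
          fix \<omega> assume x: "X i \<omega> \<ge> 0"
          have "(- a i * \<Delta>) * X i \<omega> \<le> 0" using si x by (rule mult_nonpos_nonneg)
          hence "exp ((- a i * \<Delta>) * X i \<omega>) \<le> 1" by simp
          hence "X i \<omega> * exp ((- a i * \<Delta>) * X i \<omega>) \<le> X i \<omega>" using x by (simp add: mult_left_le)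
          thus "norm (h i (X i \<omega>)) \<le> norm (X i \<omega>)" unfolding h_def using True x by simp
        qed
      qed
    next
      case False
      show ?thesis
      proof (rule integrable_const_bound[where B=1])
        show "(\<lambda>\<omega>. h i (X i \<omega>)) \<in> borel_measurable M" unfolding h_def by measurable
        show "AE \<omega> in M. norm (h i (X i \<omega>)) \<le> 1"
          using Xnn[OF i']
        proof eventually_elim
          fix \<omega> assume x: "X i \<omega> \<ge> 0"
          have "(- a i * \<Delta>) * X i \<omega> \<le> 0" using si x by (rule mult_nonpos_nonneg)
          thus "norm (h i (X i \<omega>)) \<le> 1" unfolding h_def using False by simp
        qed
      qed
    qed
  qed
  have E: "(\<integral>\<omega>. (\<Prod>i\<in>{..<n}. h i (X i \<omega>)) \<partial>M) = (\<Prod>i\<in>{..<n}. \<integral>\<omega>. h i (X i \<omega>) \<partial>M)"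
    by (rule indep_vars_lebesgue_integral[OF _ ind2 hint]) auto
  have jn: "j \<in> {..<n}" using j by simp
  have R: "(\<Prod>i\<in>{..<n}. \<integral>\<omega>. h i (X i \<omega>) \<partial>M)
      = deriv (mgf M (X j)) (- a j * \<Delta>) * (\<Prod>i\<in>{..<n} - {j}. mgf M (X i) (- a i * \<Delta>))"
  proof -
    have "(\<Prod>i\<in>{..<n}. \<integral>\<omega>. h i (X i \<omega>) \<partial>M)
        = (\<integral>\<omega>. h j (X j \<omega>) \<partial>M) * (\<Prod>i\<in>{..<n} - {j}. \<integral>\<omega>. h i (X i \<omega>) \<partial>M)"
      by (rule prod.remove[OF _ jn]) simp
    also have "(\<integral>\<omega>. h j (X j \<omega>) \<partial>M) = deriv (mgf M (X j)) (- a j * \<Delta>)"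
      unfolding der[unfolded t_def] h_def by simp
    also have "(\<Prod>i\<in>{..<n} - {j}. \<integral>\<omega>. h i (X i \<omega>) \<partial>M) = (\<Prod>i\<in>{..<n} - {j}. mgf M (X i) (- a i * \<Delta>))"
      by (rule prod.cong) (auto simp: h_def mgf_def)
    finally show ?thesis .
  qed
  have Lp: "(\<Prod>i\<in>{..<n}. h i (X i \<omega>)) = X j \<omega> * exp (- ((\<Sum>i<n. a i * X i \<omega>) * \<Delta>))" for \<omega>
  proof -
    have "(\<Prod>i\<in>{..<n}. h i (X i \<omega>)) = h j (X j \<omega>) * (\<Prod>i\<in>{..<n} - {j}. h i (X i \<omega>))"
      by (rule prod.remove[OF _ jn]) simp
    also have "(\<Prod>i\<in>{..<n} - {j}. h i (X i \<omega>)) = (\<Prod>i\<in>{..<n} - {j}. exp ((- a i * \<Delta>) * X i \<omega>))"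
      by (rule prod.cong) (auto simp: h_def)
    also have "h j (X j \<omega>) = X j \<omega> * exp ((- a j * \<Delta>) * X j \<omega>)" unfolding h_def by simp
    finally have "(\<Prod>i\<in>{..<n}. h i (X i \<omega>)) = X j \<omega> * (exp ((- a j * \<Delta>) * X j \<omega>) * (\<Prod>i\<in>{..<n} - {j}. exp ((- a i * \<Delta>) * X i \<omega>)))"
      by (simp only: mult.assoc)
    also have "exp ((- a j * \<Delta>) * X j \<omega>) * (\<Prod>i\<in>{..<n} - {j}. exp ((- a i * \<Delta>) * X i \<omega>))
        = (\<Prod>i\<in>{..<n}. exp ((- a i * \<Delta>) * X i \<omega>))"
      by (rule prod.remove[OF _ jn, symmetric]) simp
    also have "\<dots> = exp (\<Sum>i\<in>{..<n}. (- a i * \<Delta>) * X i \<omega>)"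
      by (rule exp_sum[symmetric]) simp
    also have "(\<Sum>i\<in>{..<n}. (- a i * \<Delta>) * X i \<omega>) = - ((\<Sum>i<n. a i * X i \<omega>) * \<Delta>)"
    proof -
      have "(\<Sum>i\<in>{..<n}. (- a i * \<Delta>) * X i \<omega>) = (\<Sum>i\<in>{..<n}. - (\<Delta> * (a i * X i \<omega>)))"
        by (rule sum.cong) (simp_all add: algebra_simps)
      also have "\<dots> = - (\<Delta> * (\<Sum>i<n. a i * X i \<omega>))"
        by (simp only: sum_negf sum_distrib_left)
      finally show ?thesis by (simp only: mult.commute)
    qed
    finally show ?thesis .
  qed
  have "a j * deriv (mgf M (X j)) (- a j * \<Delta>) * (\<Prod>i\<in>{..<n} - {j}. mgf M (X i) (- a i * \<Delta>))
      = a j * (\<Prod>i\<in>{..<n}. \<integral>\<omega>. h i (X i \<omega>) \<partial>M)" unfolding R by (simp only: mult.assoc)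
  also have "\<dots> = a j * (\<integral>\<omega>. (\<Prod>i\<in>{..<n}. h i (X i \<omega>)) \<partial>M)" unfolding E ..
  also have "\<dots> = a j * (\<integral>\<omega>. X j \<omega> * exp (- ((\<Sum>i<n. a i * X i \<omega>) * \<Delta>)) \<partial>M)" unfolding Lp ..
  finally show ?thesis .
qed




theorem mainTheorem3:
  fixes M :: "'a measure" and n :: nat
    and X :: "nat \<Rightarrow> 'a \<Rightarrow> real" and a :: "nat \<Rightarrow> real"
    and W :: "'a \<Rightarrow> real"
    and Adj :: "'d \<Rightarrow> 'd \<Rightarrow> bool" and q :: "'d \<Rightarrow> real" and \<Delta> :: real
  defines "\<Lambda> \<equiv> (\<lambda>\<omega>. \<Sum>i<n. a i * X i \<omega>)"
  assumes "prob_space M"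
    and "\<And>i. i < n \<Longrightarrow> X i \<in> borel_measurable M"
    and "prob_space.indep_vars M (\<lambda>_. borel) X {..<n}"
    and "\<And>i. i < n \<Longrightarrow> AE \<omega> in M. X i \<omega> \<ge> 0"
    and "\<And>i. i < n \<Longrightarrow> integrable M (X i)"
    and "\<And>i. i < n \<Longrightarrow> a i \<ge> 0"
    and "AE \<omega> in M. \<Lambda> \<omega> > 0"
    and "symp Adj"
    and "sensitivity Adj q = ereal \<Delta>" and "0 < \<Delta>"
    and "W \<in> borel_measurable M"
    and "\<And>A B. A \<in> sets borel \<Longrightarrow> B \<in> sets borel \<Longrightarrow>
           measure M {\<omega> \<in> space M. \<Lambda> \<omega> \<in> A \<and> W \<omega> \<in> B}
             = (\<integral>\<omega>. indicator A (\<Lambda> \<omega>) * (LINT w:B|lborel. laplace_density (\<Lambda> \<omega>) w) \<partial>M)"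
  shows "differentially_private Adj M (\<lambda>d \<omega>. q d + W \<omega>)
           (ln ((\<Sum>j<n. a j * (\<integral>\<omega>. X j \<omega> \<partial>M)) /
                (\<Sum>j<n. a j * deriv (mgf M (X j)) (- a j * \<Delta>) *
                         (\<Prod>i\<in>{..<n} - {j}. mgf M (X i) (- a i * \<Delta>)))))"
proof -
  note P = assms(2) and Xm = assms(3) and indep = assms(4) and Xnn = assms(5) and Xint = assms(6)
    and ann = assms(7) and Lpos = assms(8) and sens = assms(10) and \<Delta> = assms(11) and Wm = assms(12)
    and joint = assms(13)
  interpret prob_space M by (rule P)
  have Lm: "\<Lambda> \<in> borel_measurable M" unfolding \<Lambda>_def
  proof (rule borel_measurable_sum)
    fix i assume "i \<in> {..<n}"
    hence "X i \<in> borel_measurable M" using Xm by simp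
    thus "(\<lambda>\<omega>. a i * X i \<omega>) \<in> borel_measurable M" by simp
  qed
  have Lint: "integrable M \<Lambda>" unfolding \<Lambda>_def
    by (rule Bochner_Integration.integrable_sum) (use Xint in simp)
  have Lnn: "AE \<omega> in M. \<Lambda> \<omega> \<ge> 0" using Lpos by eventually_elim simp
  have num: "(\<Sum>j<n. a j * (\<integral>\<omega>. X j \<omega> \<partial>M)) = (\<integral>\<omega>. \<Lambda> \<omega> \<partial>M)"
    unfolding \<Lambda>_def by (subst Bochner_Integration.integral_sum) (use Xint in simp_all)
  have intj: "integrable M (\<lambda>\<omega>. a j * (X j \<omega> * exp (- (\<Lambda> \<omega> * \<Delta>))))" if j: "j \<in> {..<n}" for j
  proof -
    have j': "j < n" using j by simp
    have "integrable M (\<lambda>\<omega>. X j \<omega> * exp (- (\<Lambda> \<omega> * \<Delta>)))"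
    proof (rule Bochner_Integration.integrable_bound[OF Xint[OF j']])
      show "(\<lambda>\<omega>. X j \<omega> * exp (- (\<Lambda> \<omega> * \<Delta>))) \<in> borel_measurable M"
        using Xm[OF j'] Lm by simp
      have "AE \<omega> in M. X j \<omega> \<ge> 0 \<and> \<Lambda> \<omega> \<ge> 0" using Xnn[OF j'] Lnn by eventually_elim simp
      thus "AE \<omega> in M. norm (X j \<omega> * exp (- (\<Lambda> \<omega> * \<Delta>))) \<le> norm (X j \<omega>)"
      proof eventually_elim
        fix \<omega> assume x: "X j \<omega> \<ge> 0 \<and> \<Lambda> \<omega> \<ge> 0"
        have "\<Lambda> \<omega> * \<Delta> \<ge> 0" using x \<Delta> by simp
        hence "exp (- (\<Lambda> \<omega> * \<Delta>)) \<le> 1" by simp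
        hence "X j \<omega> * exp (- (\<Lambda> \<omega> * \<Delta>)) \<le> X j \<omega>" using x by (simp add: mult_left_le)
        thus "norm (X j \<omega> * exp (- (\<Lambda> \<omega> * \<Delta>))) \<le> norm (X j \<omega>)" using x by simp
      qed
    qed
    thus ?thesis by simp
  qed
  have den: "(\<Sum>j<n. a j * deriv (mgf M (X j)) (- a j * \<Delta>) * (\<Prod>i\<in>{..<n} - {j}. mgf M (X i) (- a i * \<Delta>)))
      = (\<integral>\<omega>. \<Lambda> \<omega> * exp (- (\<Lambda> \<omega> * \<Delta>)) \<partial>M)"
  proof -
    have "(\<Sum>j<n. a j * deriv (mgf M (X j)) (- a j * \<Delta>) * (\<Prod>i\<in>{..<n} - {j}. mgf M (X i) (- a i * \<Delta>)))
        = (\<Sum>j<n. a j * (\<integral>\<omega>. X j \<omega> * exp (- (\<Lambda> \<omega> * \<Delta>)) \<partial>M))"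
    proof (rule sum.cong[OF refl])
      fix j assume "j \<in> {..<n}"
      hence j: "j < n" by simp
      show "a j * deriv (mgf M (X j)) (- a j * \<Delta>) * (\<Prod>i\<in>{..<n} - {j}. mgf M (X i) (- a i * \<Delta>))
          = a j * (\<integral>\<omega>. X j \<omega> * exp (- (\<Lambda> \<omega> * \<Delta>)) \<partial>M)"
        unfolding \<Lambda>_def by (rule term_eq[OF P Xm indep Xnn Xint ann \<Delta> j])
    qed
    also have "\<dots> = (\<Sum>j<n. (\<integral>\<omega>. a j * (X j \<omega> * exp (- (\<Lambda> \<omega> * \<Delta>))) \<partial>M))"
      by simp
    also have "\<dots> = (\<integral>\<omega>. (\<Sum>j<n. a j * (X j \<omega> * exp (- (\<Lambda> \<omega> * \<Delta>)))) \<partial>M)"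
      by (rule Bochner_Integration.integral_sum[symmetric]) (rule intj)
    also have "\<dots> = (\<integral>\<omega>. \<Lambda> \<omega> * exp (- (\<Lambda> \<omega> * \<Delta>)) \<partial>M)"
    proof (rule arg_cong[where f="integral\<^sup>L M"], rule ext)
      fix \<omega>
      show "(\<Sum>j<n. a j * (X j \<omega> * exp (- (\<Lambda> \<omega> * \<Delta>)))) = \<Lambda> \<omega> * exp (- (\<Lambda> \<omega> * \<Delta>))"
        by (subst (2) \<Lambda>_def) (simp add: sum_distrib_right mult.assoc)
    qed
    finally show ?thesis .
  qed
  have mpos: "(\<integral>\<omega>. \<Lambda> \<omega> \<partial>M) > 0" by (rule int_pos[OF P Lint Lpos])
  have gpos: "(\<integral>\<omega>. \<Lambda> \<omega> * exp (- (\<Lambda> \<omega> * \<Delta>)) \<partial>M) > 0"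
  proof (rule int_pos[OF P])
    show "integrable M (\<lambda>\<omega>. \<Lambda> \<omega> * exp (- (\<Lambda> \<omega> * \<Delta>)))"
      by (rule intLexp[OF P Lm Lnn Lint]) (use \<Delta> in simp)
    show "AE \<omega> in M. \<Lambda> \<omega> * exp (- (\<Lambda> \<omega> * \<Delta>)) > 0" using Lpos by eventually_elim simp
  qed
  define r where "r = (\<integral>\<omega>. \<Lambda> \<omega> \<partial>M) / (\<integral>\<omega>. \<Lambda> \<omega> * exp (- (\<Lambda> \<omega> * \<Delta>)) \<partial>M)"
  have rpos: "r > 0" unfolding r_def using mpos gpos by simp
  show ?thesis
    unfolding differentially_private_def num den r_def[symmetric] exp_ln[OF rpos]
  proof (intro allI impI)
    fix d d' S assume adj: "Adj d d'" and S: "S \<in> sets (borel :: real measure)"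
    have "ereal \<bar>q (fst (d, d')) - q (snd (d, d'))\<bar> \<le> sensitivity Adj q"
      unfolding sensitivity_def by (rule SUP_upper) (use adj in simp)
    hence cc: "\<bar>q d - q d'\<bar> \<le> \<Delta>" using sens by simp
    have "measure M {\<omega> \<in> space M. q d + W \<omega> \<in> S} \<le> r * measure M {\<omega> \<in> space M. q d' + W \<omega> \<in> S}"
      unfolding r_def by (rule mech_ineq[OF P Lm Lpos Lint Wm \<Delta> cc S joint])
    thus "measure M {\<omega> \<in> space M. q d + W \<omega> \<in> S} \<le> r * measure M {\<omega> \<in> space M. q d' + W \<omega> \<in> S}" .
  qed
qed


end
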